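(* Let $X$ be a proper CAT(0) space or a disjoint union of countably many proper CAT(0) spaces, endowed with an isometric action of a group $\Gamma$ having discrete orbits. Then $X$ has a locally finite $\Gamma$-good cover $\mathcal{U}$.
   Context: In a disjoint union of metric spaces, points in different pieces are at distance $\infty$. A $\Gamma$-good cover of such $X$ is a cover $\mathcal{U}$ of $X$ by open metric balls such that (1) $\Gamma\cdot\mathcal{U}=\mathcal{U}$, and (2) if $B\in\mathcal{U}$, $\gamma\in\Gamma$ and $\gamma\cdot B\cap B\neq\emptyset$, then $\gamma\cdot B=B$. *)

theory Defs
  imports "HOL-Analysis.Analysis" "HOL-Algebra.Group_Action"
begin

definition proper_ms :: "'a set \<Rightarrow> ('a \<Rightarrow> 'a \<Rightarrow> real) \<Rightarrow> bool" where
  "proper_ms M d \<longleftrightarrow> Metric_space M d \<and>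
     (\<forall>x\<in>M. \<forall>r. compactin (Metric_space.mtopology M d) (Metric_space.mcball M d x r))"

definition geodesic_seg :: "'a set \<Rightarrow> ('a \<Rightarrow> 'a \<Rightarrow> real) \<Rightarrow> (real \<Rightarrow> 'a) \<Rightarrow> 'a \<Rightarrow> 'a \<Rightarrow> bool" where
  "geodesic_seg M d c x y \<longleftrightarrow> c 0 = x \<and> c (d x y) = y \<and>
     (\<forall>s\<in>{0..d x y}. c s \<in> M) \<and>
     (\<forall>s\<in>{0..d x y}. \<forall>t\<in>{0..d x y}. d (c s) (c t) = \<bar>s - t\<bar>)"

text \<open>CAT(0) space (Bridson--Haefliger II.1.1): a geodesic metric space in which every
  geodesic triangle satisfies the CAT(0) comparison inequality with respect to its
  comparison triangle in the Euclidean plane (modelled as the complex plane).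
  It suffices to compare pairs of points lying on two sides [x,y] and [y,z] of an arbitrary
  triangle, since all triangles (with all labelings) are quantified over; points on the same
  side satisfy the inequality with equality.\<close>
definition CAT0 :: "'a set \<Rightarrow> ('a \<Rightarrow> 'a \<Rightarrow> real) \<Rightarrow> bool" where
  "CAT0 M d \<longleftrightarrow> Metric_space M d \<and>
     (\<forall>x\<in>M. \<forall>y\<in>M. \<exists>c. geodesic_seg M d c x y) \<and>
     (\<forall>x\<in>M. \<forall>y\<in>M. \<forall>z\<in>M. \<forall>c1 c2 c3. \<forall>x' y' z' :: complex.
        geodesic_seg M d c1 x y \<and> geodesic_seg M d c2 y z \<and> geodesic_seg M d c3 z x \<and>
        dist x' y' = d x y \<and> dist y' z' = d y z \<and> dist z' x' = d z x \<longrightarrow>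
        (\<forall>s\<in>{0..d x y}. \<forall>t\<in>{0..d y z}.
           d (c1 s) (c2 t) \<le>
           dist (x' + complex_of_real (s / d x y) * (y' - x'))
                (y' + complex_of_real (t / d y z) * (z' - y'))))"

text \<open>The space X is the union of a family P of pairwise disjoint pieces; the
  metric d is only meaningful inside a piece; points in different pieces are at
  distance infinity.\<close>
definition same_piece :: "'a set set \<Rightarrow> 'a \<Rightarrow> 'a \<Rightarrow> bool" where
  "same_piece P x y \<longleftrightarrow> (\<exists>p\<in>P. x \<in> p \<and> y \<in> p)"

definition udist :: "'a set set \<Rightarrow> ('a \<Rightarrow> 'a \<Rightarrow> real) \<Rightarrow> 'a \<Rightarrow> 'a \<Rightarrow> ereal" where
  "udist P d x y = (if same_piece P x y then ereal (d x y) else \<infinity>)"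

definition uball :: "'a set set \<Rightarrow> ('a \<Rightarrow> 'a \<Rightarrow> real) \<Rightarrow> 'a \<Rightarrow> real \<Rightarrow> 'a set" where
  "uball P d x r = {y \<in> \<Union>P. udist P d x y < ereal r}"

definition countable_union_proper_CAT0 :: "'a set set \<Rightarrow> ('a \<Rightarrow> 'a \<Rightarrow> real) \<Rightarrow> bool" where
  "countable_union_proper_CAT0 P d \<longleftrightarrow> countable P \<and> disjoint P \<and> {} \<notin> P \<and>
     (\<forall>p\<in>P. proper_ms p d \<and> CAT0 p d)"

definition isometric_action ::
  "('g, 'm) monoid_scheme \<Rightarrow> ('g \<Rightarrow> 'a \<Rightarrow> 'a) \<Rightarrow> 'a set set \<Rightarrow> ('a \<Rightarrow> 'a \<Rightarrow> real) \<Rightarrow> bool" where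
  "isometric_action G \<phi> P d \<longleftrightarrow> group_action G (\<Union>P) \<phi> \<and>
     (\<forall>g\<in>carrier G. \<forall>x\<in>\<Union>P. \<forall>y\<in>\<Union>P. udist P d (\<phi> g x) (\<phi> g y) = udist P d x y)"

definition discrete_orbits ::
  "('g, 'm) monoid_scheme \<Rightarrow> ('g \<Rightarrow> 'a \<Rightarrow> 'a) \<Rightarrow> 'a set set \<Rightarrow> ('a \<Rightarrow> 'a \<Rightarrow> real) \<Rightarrow> bool" where
  "discrete_orbits G \<phi> P d \<longleftrightarrow>
     (\<forall>x\<in>\<Union>P. \<forall>y\<in>orbit G \<phi> x. \<exists>\<epsilon>>0. \<forall>z\<in>orbit G \<phi> x.
        udist P d y z < ereal \<epsilon> \<longrightarrow> z = y)"

definition good_cover ::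
  "('g, 'm) monoid_scheme \<Rightarrow> ('g \<Rightarrow> 'a \<Rightarrow> 'a) \<Rightarrow> 'a set set \<Rightarrow> ('a \<Rightarrow> 'a \<Rightarrow> real)
     \<Rightarrow> 'a set set \<Rightarrow> bool" where
  "good_cover G \<phi> P d \<U> \<longleftrightarrow>
     (\<forall>B\<in>\<U>. \<exists>x\<in>\<Union>P. \<exists>r>0. B = uball P d x r) \<and>
     \<Union>\<U> = \<Union>P \<and>
     {\<phi> g ` B | g B. g \<in> carrier G \<and> B \<in> \<U>} = \<U> \<and>
     (\<forall>B\<in>\<U>. \<forall>g\<in>carrier G. \<phi> g ` B \<inter> B \<noteq> {} \<longrightarrow> \<phi> g ` B = B)"

definition locally_finite_cover :: "'a set set \<Rightarrow> ('a \<Rightarrow> 'a \<Rightarrow> real) \<Rightarrow> 'a set set \<Rightarrow> bool" where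
  "locally_finite_cover P d \<U> \<longleftrightarrow>
     (\<forall>x\<in>\<Union>P. \<exists>r>0. finite {B\<in>\<U>. B \<inter> uball P d x r \<noteq> {}})"

end

theory Submission
  imports Defs
begin

lemma sep_finite:
  assumes M: "Metric_space M d" and K: "compactin (Metric_space.mtopology M d) K"
    and EK: "E \<subseteq> K" and e: "e > 0" and sep: "\<forall>a\<in>E. \<forall>b\<in>E. d a b < e \<longrightarrow> a = b"
  shows "finite E"
proof -
  interpret Metric_space M d by (rule M)
  have KM: "K \<subseteq> M" using K compactin_subset_topspace by fastforce
  let ?U = "(\<lambda>x. mball x (e/2)) ` K"
  have "K \<subseteq> \<Union>?U" using KM e by force
  then obtain F where F: "finite F" "F \<subseteq> ?U" "K \<subseteq> \<Union>F"
    using K unfolding compactin_def by (metis (no_types, lifting) image_iff openin_mball)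
  define h where "h a = (SOME B. B \<in> F \<and> a \<in> B)" for a
  have h: "h a \<in> F \<and> a \<in> h a" if "a \<in> E" for a
    unfolding h_def using that EK F(3) by (metis (mono_tags, lifting) UnionE someI subsetD)
  have "inj_on h E"
  proof (rule inj_onI)
    fix a b assume a: "a \<in> E" and b: "b \<in> E" and eq: "h a = h b"
    obtain x where x: "x \<in> K" "h a = mball x (e/2)" using h[OF a] F(2) by blast
    have "a \<in> mball x (e/2)" "b \<in> mball x (e/2)" using h a b eq x by metis+
    hence "d a b \<le> d x a + d x b" using triangle''[of a x b] by auto
    hence "d a b < e" using \<open>a \<in> mball x (e/2)\<close> \<open>b \<in> mball x (e/2)\<close> by auto
    thus "a = b" using sep a b by blast
  qed
  moreover have "h ` E \<subseteq> F" using h by blast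
  ultimately show ?thesis using F(1) finite_imageD finite_subset by metis
qed

locale PS =
  fixes G :: "('g,'m) monoid_scheme" (structure) and \<phi> :: "'g \<Rightarrow> 'a \<Rightarrow> 'a"
    and P :: "'a set set" and d :: "'a \<Rightarrow> 'a \<Rightarrow> real"
  assumes cu: "countable_union_proper_CAT0 P d"
    and ia: "isometric_action G \<phi> P d"
    and dor: "discrete_orbits G \<phi> P d"
begin

lemma ga: "group_action G (\<Union>P) \<phi>" using ia by (simp add: isometric_action_def)
lemma grp: "group G" using ga group_action_def group_hom_def by blast
lemma met: "p\<in>P \<Longrightarrow> Metric_space p d" using cu by (auto simp: countable_union_proper_CAT0_def proper_ms_def)
lemma properp: "p\<in>P \<Longrightarrow> compactin (Metric_space.mtopology p d) (Metric_space.mcball p d x r)"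
proof -
  assume p: "p \<in> P"
  then interpret Metric_space p d by (rule met)
  show ?thesis
  proof (cases "x \<in> p")
    case True thus ?thesis using cu p by (auto simp: countable_union_proper_CAT0_def proper_ms_def)
  next
    case False then have "mcball x r = {}" by (auto simp: mcball_def)
    thus ?thesis by simp
  qed
qed
lemma disj: "p\<in>P \<Longrightarrow> q\<in>P \<Longrightarrow> x\<in>p \<Longrightarrow> x\<in>q \<Longrightarrow> p=q"
  using cu unfolding countable_union_proper_CAT0_def disjoint_def by blast
lemma nonempty: "p \<in> P \<Longrightarrow> \<exists>x. x \<in> p" using cu unfolding countable_union_proper_CAT0_def by (metis all_not_in_conv)

lemma udist_same: "p\<in>P \<Longrightarrow> x\<in>p \<Longrightarrow> y\<in>p \<Longrightarrow> udist P d x y = ereal (d x y)"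
  by (auto simp: udist_def same_piece_def)
lemma udist_diff: "\<not> same_piece P x y \<Longrightarrow> udist P d x y = \<infinity>"
  by (auto simp: udist_def)
lemma sp_sym: "same_piece P x y \<Longrightarrow> same_piece P y x" by (auto simp: same_piece_def)
lemma sp_trans: "same_piece P x y \<Longrightarrow> same_piece P y z \<Longrightarrow> same_piece P x z"
  unfolding same_piece_def using disj by blast
lemma sp_in: "p \<in> P \<Longrightarrow> x \<in> p \<Longrightarrow> same_piece P x y \<Longrightarrow> y \<in> p"
  unfolding same_piece_def using disj by blast

lemma act_X: "g\<in>carrier G \<Longrightarrow> x\<in>\<Union>P \<Longrightarrow> \<phi> g x \<in> \<Union>P"
  using group_action.element_image[OF ga] by blast
lemma iso: "g\<in>carrier G \<Longrightarrow> x\<in>\<Union>P \<Longrightarrow> y\<in>\<Union>P \<Longrightarrow> udist P d (\<phi> g x) (\<phi> g y) = udist P d x y"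
  using ia unfolding isometric_action_def by blast
lemma sp_iff: "g\<in>carrier G \<Longrightarrow> x\<in>\<Union>P \<Longrightarrow> y\<in>\<Union>P \<Longrightarrow> same_piece P (\<phi> g x) (\<phi> g y) \<longleftrightarrow> same_piece P x y"
  using iso[of g x y] by (auto simp: udist_def split: if_splits)
lemma d_iso: "g\<in>carrier G \<Longrightarrow> x\<in>\<Union>P \<Longrightarrow> y\<in>\<Union>P \<Longrightarrow> same_piece P x y \<Longrightarrow> d (\<phi> g x) (\<phi> g y) = d x y"
  using iso[of g x y] sp_iff[of g x y] by (auto simp: udist_def)
lemma comp: "g\<in>carrier G \<Longrightarrow> h\<in>carrier G \<Longrightarrow> x\<in>\<Union>P \<Longrightarrow> \<phi> (g \<otimes> h) x = \<phi> g (\<phi> h x)"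
  using group_action.composition_rule[OF ga] by blast
lemma inv_cl: "g\<in>carrier G \<Longrightarrow> inv g \<in> carrier G" using grp by (simp add: group.inv_closed)
lemma inv1: "g\<in>carrier G \<Longrightarrow> x\<in>\<Union>P \<Longrightarrow> \<phi> (inv g) (\<phi> g x) = x"
  using group_action.orbit_sym_aux[OF ga] by blast
lemma inv2: "g\<in>carrier G \<Longrightarrow> x\<in>\<Union>P \<Longrightarrow> \<phi> g (\<phi> (inv g) x) = x"
  using inv1[of "inv g" x] inv_cl grp by (simp add: group.inv_inv)
lemma one_act: "x\<in>\<Union>P \<Longrightarrow> \<phi> \<one> x = x"
  using group_action.id_eq_one[OF ga] by (metis restrict_apply')
lemma one_cl: "\<one> \<in> carrier G" using grp by (simp add: group.is_monoid monoid.one_closed)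
lemma m_cl: "g\<in>carrier G \<Longrightarrow> h\<in>carrier G \<Longrightarrow> g \<otimes> h \<in> carrier G" using grp by (simp add: group.is_monoid monoid.m_closed)

definition Q where "Q z = {q\<in>P. \<exists>g\<in>carrier G. \<phi> g z \<in> q}"
definition rep where "rep z = (SOME q. q \<in> Q z)"
definition ob where "ob z = (SOME x. x \<in> rep z)"
definition W where "W z = {w. w \<in> rep z \<and> (\<exists>g\<in>carrier G. w = \<phi> g z)}"
definition f where "f z = Inf ((\<lambda>w. d (ob z) w) ` W z)"

lemma Q_same: assumes "same_piece P z z'" "z\<in>\<Union>P" "z'\<in>\<Union>P" shows "Q z = Q z'"
proof -
  have *: "q \<in> Q b" if "q \<in> Q a" "same_piece P a b" "a\<in>\<Union>P" "b\<in>\<Union>P" for a b q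
  proof -
    from that obtain g where g: "g\<in>carrier G" "\<phi> g a \<in> q" "q \<in> P" by (auto simp: Q_def)
    have "same_piece P (\<phi> g a) (\<phi> g b)" using sp_iff[OF g(1) that(3,4)] that(2) by simp
    hence "\<phi> g b \<in> q" using sp_in g by blast
    thus ?thesis using g by (auto simp: Q_def)
  qed
  show ?thesis using *[of _ z z'] *[of _ z' z] assms sp_sym by blast
qed

lemma Q_act: assumes h: "h\<in>carrier G" and z: "z\<in>\<Union>P" shows "Q (\<phi> h z) = Q z"
proof
  show "Q (\<phi> h z) \<subseteq> Q z"
  proof
    fix q assume "q \<in> Q (\<phi> h z)"
    then obtain g where g: "g\<in>carrier G" "\<phi> g (\<phi> h z) \<in> q" "q\<in>P" by (auto simp: Q_def)
    hence "\<phi> (g \<otimes> h) z \<in> q" using comp h z by simp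
    thus "q \<in> Q z" using g m_cl h by (auto simp: Q_def)
  qed
  show "Q z \<subseteq> Q (\<phi> h z)"
  proof
    fix q assume "q \<in> Q z"
    then obtain g where g: "g\<in>carrier G" "\<phi> g z \<in> q" "q\<in>P" by (auto simp: Q_def)
    have "\<phi> (g \<otimes> inv h) (\<phi> h z) = \<phi> g z"
      using comp[OF g(1) inv_cl[OF h] act_X[OF h z]] inv1[OF h z] by simp
    thus "q \<in> Q (\<phi> h z)" unfolding Q_def using g m_cl[OF g(1) inv_cl[OF h]] by force
  qed
qed

lemma Q_ne: assumes z: "z\<in>\<Union>P" shows "\<exists>q. q \<in> Q z"
proof -
  obtain q where "q \<in> P" "z \<in> q" using z by blast
  hence "q \<in> Q z" using one_act[OF z] one_cl unfolding Q_def by force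
  thus ?thesis by blast
qed

lemma rep_in: "z\<in>\<Union>P \<Longrightarrow> rep z \<in> Q z"
  unfolding rep_def using Q_ne by (metis someI)
lemma rep_P: "z\<in>\<Union>P \<Longrightarrow> rep z \<in> P" using rep_in by (auto simp: Q_def)
lemma ob_in: "z\<in>\<Union>P \<Longrightarrow> ob z \<in> rep z"
  unfolding ob_def using nonempty rep_P by (metis someI)
lemma rep_same: "same_piece P z z' \<Longrightarrow> z\<in>\<Union>P \<Longrightarrow> z'\<in>\<Union>P \<Longrightarrow> rep z = rep z'"
  unfolding rep_def using Q_same by simp
lemma rep_act: "h\<in>carrier G \<Longrightarrow> z\<in>\<Union>P \<Longrightarrow> rep (\<phi> h z) = rep z"
  unfolding rep_def using Q_act by simp
lemma ob_same: "same_piece P z z' \<Longrightarrow> z\<in>\<Union>P \<Longrightarrow> z'\<in>\<Union>P \<Longrightarrow> ob z = ob z'"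
  unfolding ob_def using rep_same by simp
lemma ob_act: "h\<in>carrier G \<Longrightarrow> z\<in>\<Union>P \<Longrightarrow> ob (\<phi> h z) = ob z"
  unfolding ob_def using rep_act by simp

lemma W_ne: assumes z: "z\<in>\<Union>P" shows "W z \<noteq> {}"
proof -
  obtain g where "g \<in> carrier G" "\<phi> g z \<in> rep z" using rep_in[OF z] by (auto simp: Q_def)
  hence "\<phi> g z \<in> W z" by (auto simp: W_def)
  thus ?thesis by blast
qed
lemma W_X: "z\<in>\<Union>P \<Longrightarrow> w \<in> W z \<Longrightarrow> w \<in> rep z"
  by (auto simp: W_def)

lemma orb_act: assumes h: "h\<in>carrier G" and z: "z\<in>\<Union>P"
  shows "(\<exists>g\<in>carrier G. w = \<phi> g (\<phi> h z)) \<longleftrightarrow> (\<exists>g\<in>carrier G. w = \<phi> g z)"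
proof
  assume "\<exists>g\<in>carrier G. w = \<phi> g (\<phi> h z)"
  then obtain g where "g\<in>carrier G" "w = \<phi> g (\<phi> h z)" by blast
  thus "\<exists>g\<in>carrier G. w = \<phi> g z" using comp h z m_cl by metis
next
  assume "\<exists>g\<in>carrier G. w = \<phi> g z"
  then obtain g where g: "g\<in>carrier G" "w = \<phi> g z" by blast
  have "\<phi> (g \<otimes> inv h) (\<phi> h z) = \<phi> g z"
    using comp[OF g(1) inv_cl[OF h] act_X[OF h z]] inv1[OF h z] by simp
  thus "\<exists>g\<in>carrier G. w = \<phi> g (\<phi> h z)" using g m_cl inv_cl h by metis
qed

lemma W_act: "h\<in>carrier G \<Longrightarrow> z\<in>\<Union>P \<Longrightarrow> W (\<phi> h z) = W z"
  unfolding W_def using rep_act orb_act by simp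
lemma f_act: "h\<in>carrier G \<Longrightarrow> z\<in>\<Union>P \<Longrightarrow> f (\<phi> h z) = f z"
  unfolding f_def using W_act ob_act by simp

lemma bdd: assumes z: "z\<in>\<Union>P" shows "bdd_below ((\<lambda>w. d (ob z) w) ` W z)"
proof -
  have "Metric_space (rep z) d" using met rep_P z by blast
  hence "0 \<le> d (ob z) w" for w by (rule Metric_space.nonneg)
  thus ?thesis by (intro bdd_belowI[where m=0]) auto
qed

lemma f_le: assumes z: "z\<in>\<Union>P" and w: "w \<in> W z" shows "f z \<le> d (ob z) w"
  unfolding f_def by (rule cInf_lower[OF imageI[OF w] bdd[OF z]])
lemma f_lt: assumes z: "z\<in>\<Union>P" and lt: "f z < c" shows "\<exists>w\<in>W z. d (ob z) w < c"
proof -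
  have ne: "(\<lambda>w. d (ob z) w) ` W z \<noteq> {}" using W_ne[OF z] by blast
  obtain x where "x \<in> (\<lambda>w. d (ob z) w) ` W z" "x < c" using cInf_lessD[OF ne lt[unfolded f_def]] by blast
  thus ?thesis by blast
qed
lemma f_self: assumes zr: "z \<in> rep z" and z: "z\<in>\<Union>P" shows "f z \<le> d (ob z) z"
proof -
  have "z = \<phi> \<one> z" using one_act[OF z] by simp
  hence "z \<in> W z" using zr one_cl unfolding W_def by blast
  thus ?thesis using f_le[OF z] by blast
qed

lemma f_lip: assumes sp: "same_piece P z z'" and z: "z\<in>\<Union>P" and z': "z'\<in>\<Union>P"
  shows "f z \<le> f z' + d z z'"
proof -
  have r: "rep z' = rep z" and o: "ob z' = ob z" using rep_same ob_same sp z z' by metis+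
  have rP: "rep z \<in> P" using rep_P z by blast
  interpret Metric_space "rep z" d using met rP by blast
  have "f z - d z z' \<le> d (ob z') w'" if w': "w' \<in> W z'" for w'
  proof -
    obtain g where g: "g\<in>carrier G" "w' = \<phi> g z'" "w' \<in> rep z" using w' r by (auto simp: W_def)
    have "same_piece P (\<phi> g z) (\<phi> g z')" using sp_iff[OF g(1) z z'] sp by simp
    hence w: "\<phi> g z \<in> rep z" using sp_in[OF rP g(3)] g(2) sp_sym by blast
    hence "\<phi> g z \<in> W z" using g by (auto simp: W_def)
    hence "f z \<le> d (ob z) (\<phi> g z)" using f_le z by blast
    also have "\<dots> \<le> d (ob z) w' + d w' (\<phi> g z)" using triangle ob_in[OF z] w g by blast
    also have "d w' (\<phi> g z) = d z z'" using d_iso[OF g(1) z z' sp] g commute by simp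
    finally show ?thesis using o by simp
  qed
  hence "f z - d z z' \<le> f z'" unfolding f_def using W_ne[OF z'] by (intro cInf_greatest) auto
  thus ?thesis by simp
qed

lemma f_nonneg: "z\<in>\<Union>P \<Longrightarrow> 0 \<le> f z"
proof -
  assume z: "z\<in>\<Union>P"
  have "Metric_space (rep z) d" using met rep_P z by blast
  hence "0 \<le> d (ob z) w" for w by (rule Metric_space.nonneg)
  thus ?thesis unfolding f_def using W_ne[OF z] by (intro cInf_greatest) auto
qed

lemma rep_piece: assumes z: "z\<in>\<Union>P" and y: "y \<in> rep z" shows "rep y = rep z"
proof -
  obtain g where g: "g\<in>carrier G" "\<phi> g z \<in> rep z" using rep_in[OF z] by (auto simp: Q_def)
  have yX: "y \<in> \<Union>P" using y rep_P[OF z] by blast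
  have "same_piece P y (\<phi> g z)" using y g rep_P[OF z] by (auto simp: same_piece_def)
  hence "rep y = rep (\<phi> g z)" using rep_same yX act_X[OF g(1) z] by blast
  thus ?thesis using rep_act g z by simp
qed

definition eps where "eps y = (SOME e. e > 0 \<and> (\<forall>z\<in>orbit G \<phi> y. udist P d y z < ereal e \<longrightarrow> z = y))"
lemma eps: assumes y: "y\<in>\<Union>P"
  shows "eps y > 0 \<and> (\<forall>z\<in>orbit G \<phi> y. udist P d y z < ereal (eps y) \<longrightarrow> z = y)"
proof -
  have "y \<in> orbit G \<phi> y" using group_action.orbit_refl[OF ga y] .
  hence "\<exists>e>0. \<forall>z\<in>orbit G \<phi> y. udist P d y z < ereal e \<longrightarrow> z = y"
    using dor y unfolding discrete_orbits_def by blast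
  thus ?thesis unfolding eps_def by (rule someI_ex[where P="\<lambda>e. e > 0 \<and> (\<forall>z\<in>orbit G \<phi> y. udist P d y z < ereal e \<longrightarrow> z = y)"])
qed

lemma sep: assumes y: "y\<in>\<Union>P" and g: "g\<in>carrier G" and k: "k\<in>carrier G"
  and lt: "udist P d (\<phi> g y) (\<phi> k y) < ereal (eps y)" shows "\<phi> g y = \<phi> k y"
proof -
  let ?b = "\<phi> k y"
  have bX: "?b \<in> \<Union>P" using act_X k y by blast
  define v where "v = \<phi> (inv g) ?b"
  have vX: "v \<in> \<Union>P" using act_X inv_cl g bX v_def by blast
  have "v = \<phi> (inv g \<otimes> k) y" using comp[OF inv_cl[OF g] k y] v_def by simp
  hence vo: "v \<in> orbit G \<phi> y" using m_cl[OF inv_cl[OF g] k] unfolding orbit_def by blast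
  have "udist P d y v = udist P d (\<phi> g y) (\<phi> g v)" using iso[OF g y vX] by simp
  also have "\<phi> g v = ?b" using inv2[OF g bX] v_def by simp
  finally have "v = y" using eps[OF y] vo lt by auto
  thus ?thesis using inv2[OF g bX] v_def by metis
qed

definition s where "s y = min (1/2) (eps y / 2)"
lemma s_pos: "y\<in>\<Union>P \<Longrightarrow> s y > 0" using eps by (simp add: s_def)

definition A where "A p n = {y \<in> p. d (SOME x. x \<in> p) y \<le> real n + 1 \<and> real n \<le> f y}"

lemma ob_rep: "z\<in>\<Union>P \<Longrightarrow> y \<in> rep z \<Longrightarrow> ob y = (SOME x. x \<in> rep z)"
  unfolding ob_def using rep_piece by simp

lemma A_compact: assumes z: "z\<in>\<Union>P"
  shows "compactin (Metric_space.mtopology (rep z) d) (A (rep z) n)"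
proof -
  let ?p = "rep z"
  have pP: "?p \<in> P" using rep_P z by blast
  interpret Metric_space ?p d using met pP by blast
  let ?o = "SOME x. x \<in> ?p"
  have o: "?o \<in> ?p" using ob_in[OF z] unfolding ob_def by blast
  have pX: "y \<in> ?p \<Longrightarrow> y \<in> \<Union>P" for y using pP by blast
  have "openin mtopology (?p - A ?p n)"
    unfolding openin_mtopology
  proof (intro conjI allI impI)
    show "?p - A ?p n \<subseteq> ?p" by blast
    fix y assume y: "y \<in> ?p - A ?p n"
    hence yp: "y \<in> ?p" by blast
    show "\<exists>r>0. mball y r \<subseteq> ?p - A ?p n"
    proof (cases "d ?o y > real n + 1")
      case True
      show ?thesis
      proof (intro exI conjI)
        show "d ?o y - (real n + 1) > 0" using True by simp
        show "mball y (d ?o y - (real n + 1)) \<subseteq> ?p - A ?p n"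
        proof
          fix w assume w: "w \<in> mball y (d ?o y - (real n + 1))"
          hence "d ?o y \<le> d ?o w + d w y" using triangle o yp by auto
          hence "d ?o w > real n + 1" using w commute by auto
          thus "w \<in> ?p - A ?p n" using w by (auto simp: A_def)
        qed
      qed
    next
      case False
      hence fy: "f y < real n" using y by (auto simp: A_def)
      show ?thesis
      proof (intro exI conjI)
        show "real n - f y > 0" using fy by simp
        show "mball y (real n - f y) \<subseteq> ?p - A ?p n"
        proof
          fix w assume w: "w \<in> mball y (real n - f y)"
          hence "same_piece P w y" using yp pP by (auto simp: same_piece_def)
          hence "f w \<le> f y + d w y" using f_lip w pX yp by auto
          hence "f w < real n" using w commute by auto
          thus "w \<in> ?p - A ?p n" using w by (auto simp: A_def)
        qed
      qed
    qed
  qed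
  hence cl: "closedin mtopology (A ?p n)" unfolding closedin_def by (auto simp: A_def)
  have "A ?p n \<subseteq> mcball ?o (real n + 1)" using o by (auto simp: A_def)
  thus ?thesis using closed_compactin properp[OF pP] cl by blast
qed

lemma fin_cover: assumes z: "z\<in>\<Union>P"
  shows "\<exists>F. F \<subseteq> A (rep z) n \<and> finite F \<and> A (rep z) n \<subseteq> (\<Union>y\<in>F. Metric_space.mball (rep z) d y (s y))"
proof -
  let ?p = "rep z"
  have pP: "?p \<in> P" using rep_P z by blast
  interpret Metric_space ?p d using met pP by blast
  let ?U = "(\<lambda>y. mball y (s y)) ` A ?p n"
  have cov: "A ?p n \<subseteq> \<Union>?U"
  proof
    fix y assume y: "y \<in> A ?p n"
    hence "y \<in> ?p" by (auto simp: A_def)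
    hence "y \<in> mball y (s y)" using s_pos pP by auto
    thus "y \<in> \<Union>?U" using y by blast
  qed
  have op: "\<forall>U\<in>?U. openin mtopology U" by auto
  have cpt: "\<forall>\<U>. (\<forall>U \<in> \<U>. openin mtopology U) \<and> A ?p n \<subseteq> \<Union>\<U>
          \<longrightarrow> (\<exists>\<F>. finite \<F> \<and> \<F> \<subseteq> \<U> \<and> A ?p n \<subseteq> \<Union>\<F>)"
    using A_compact[OF z, of n] unfolding compactin_def by (rule conjunct2)
  have "\<exists>\<F>. finite \<F> \<and> \<F> \<subseteq> ?U \<and> A ?p n \<subseteq> \<Union>\<F>"
    using cpt[rule_format, OF conjI[OF op cov]] .
  then obtain F' where F': "finite F'" "F' \<subseteq> ?U" "A ?p n \<subseteq> \<Union>F'" by (elim exE conjE)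
  obtain C where C: "C \<subseteq> A ?p n" "finite C" "F' = (\<lambda>y. mball y (s y)) ` C"
    using finite_subset_image[OF F'(1) F'(2)] by (elim exE conjE)
  have "A ?p n \<subseteq> (\<Union>y\<in>C. mball y (s y))" using F'(3) C(3) by simp
  thus ?thesis using C(1,2) by (intro exI[of _ C] conjI)
qed

definition Fc where "Fc p n = (SOME F. F \<subseteq> A p n \<and> finite F \<and> A p n \<subseteq> (\<Union>y\<in>F. Metric_space.mball p d y (s y)))"
lemma Fc: "z\<in>\<Union>P \<Longrightarrow> Fc (rep z) n \<subseteq> A (rep z) n \<and> finite (Fc (rep z) n) \<and> A (rep z) n \<subseteq> (\<Union>y\<in>Fc (rep z) n. Metric_space.mball (rep z) d y (s y))"
  unfolding Fc_def by (rule someI_ex[OF fin_cover])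

definition SS where "SS = (\<Union>z\<in>\<Union>P. \<Union>n. Fc (rep z) n)"
definition UU where "UU = {uball P d (\<phi> g y) (s y) | g y. g\<in>carrier G \<and> y\<in>SS}"

lemma uball_mem: "w \<in> uball P d x r \<longleftrightarrow> w \<in> \<Union>P \<and> udist P d x w < ereal r"
  by (simp add: uball_def)

lemma uball_act: assumes h: "h\<in>carrier G" and x: "x\<in>\<Union>P"
  shows "\<phi> h ` uball P d x r = uball P d (\<phi> h x) r"
proof
  show "\<phi> h ` uball P d x r \<subseteq> uball P d (\<phi> h x) r"
    using iso[OF h x] act_X[OF h] by (auto simp: uball_mem)
  show "uball P d (\<phi> h x) r \<subseteq> \<phi> h ` uball P d x r"
  proof
    fix w assume w: "w \<in> uball P d (\<phi> h x) r"
    hence wX: "w \<in> \<Union>P" by (simp add: uball_mem)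
    let ?v = "\<phi> (inv h) w"
    have vX: "?v \<in> \<Union>P" using act_X inv_cl h wX by blast
    have e: "\<phi> h ?v = w" using inv2[OF h wX] .
    have "udist P d x ?v = udist P d (\<phi> h x) w" using iso[OF h x vX] e by simp
    hence "?v \<in> uball P d x r" using w vX by (simp add: uball_mem)
    thus "w \<in> \<phi> h ` uball P d x r" using e by force
  qed
qed

lemma udist_fin: "udist P d a w < ereal r \<Longrightarrow> same_piece P a w \<and> d a w < r"
  by (auto simp: udist_def split: if_splits)

lemma udist_tri: assumes "udist P d a w < ereal r1" "udist P d b w < ereal r2"
  shows "same_piece P a b \<and> d a b < r1 + r2"
proof -
  have 1: "same_piece P a w" "d a w < r1" and 2: "same_piece P b w" "d b w < r2"
    using udist_fin assms by blast+
  then obtain p where p: "p \<in> P" "a \<in> p" "w \<in> p" by (auto simp: same_piece_def)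
  have bp: "b \<in> p" using sp_in[OF p(1) p(3)] 2(1) sp_sym by blast
  interpret Metric_space p d using met p(1) by blast
  have "d a b \<le> d a w + d w b" using triangle p bp by blast
  thus ?thesis using 1 2 commute[of w b] p bp by (auto simp: same_piece_def)
qed

lemma SS_props: assumes "y \<in> SS"
  shows "\<exists>z\<in>\<Union>P. \<exists>n. y \<in> Fc (rep z) n \<and> y \<in> A (rep z) n \<and> y \<in> rep z \<and> y \<in> \<Union>P"
proof -
  obtain z n where z: "z\<in>\<Union>P" "y \<in> Fc (rep z) n" using assms by (auto simp: SS_def)
  hence "y \<in> A (rep z) n" using Fc by blast
  hence "y \<in> rep z" by (simp add: A_def)
  thus ?thesis using z \<open>y \<in> A (rep z) n\<close> rep_P[OF z(1)] by blast
qed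

lemma good: "good_cover G \<phi> P d UU"
  unfolding good_cover_def
proof (intro conjI)
  show "\<forall>B\<in>UU. \<exists>x\<in>\<Union>P. \<exists>r>0. B = uball P d x r"
  proof
    fix B assume "B \<in> UU"
    then obtain g y where gy: "g\<in>carrier G" "y \<in> SS" "B = uball P d (\<phi> g y) (s y)" unfolding UU_def by blast
    have yX: "y \<in> \<Union>P" using SS_props[OF gy(2)] by blast
    show "\<exists>x\<in>\<Union>P. \<exists>r>0. B = uball P d x r" using act_X[OF gy(1) yX] s_pos[OF yX] gy(3) by blast
  qed
  show "\<Union>UU = \<Union>P"
  proof
    show "\<Union>UU \<subseteq> \<Union>P" unfolding UU_def uball_def by auto
    show "\<Union>P \<subseteq> \<Union>UU"
    proof
      fix z assume z: "z \<in> \<Union>P"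
      let ?p = "rep z"
      define n where "n = nat \<lfloor>f z\<rfloor>"
      have n1: "f z < real n + 1" and n2: "real n \<le> f z" using f_nonneg[OF z] unfolding n_def by linarith+
      obtain w where w: "w \<in> W z" "d (ob z) w < real n + 1" using f_lt[OF z n1] by blast
      obtain g where g: "g \<in> carrier G" "w = \<phi> g z" "w \<in> ?p" using w(1) by (auto simp: W_def)
      have "f w = f z" using f_act g z by simp
      hence "w \<in> A ?p n" using w g n2 unfolding A_def ob_def by auto
      then obtain y where y: "y \<in> Fc ?p n" "w \<in> Metric_space.mball ?p d y (s y)" using Fc[OF z] by blast
      have yS: "y \<in> SS" using y z by (auto simp: SS_def)
      have pP: "?p \<in> P" using rep_P z by blast
      have yp: "y \<in> ?p" "d y w < s y" using y(2) Metric_space.in_mball[OF met[OF pP]] by blast+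
      have yX: "y \<in> \<Union>P" and wX: "w \<in> \<Union>P" using yp g pP by blast+
      have "udist P d y w < ereal (s y)" using udist_same[OF pP yp(1) g(3)] yp by simp
      hence "w \<in> uball P d y (s y)" using wX by (simp add: uball_mem)
      hence "\<phi> (inv g) w \<in> uball P d (\<phi> (inv g) y) (s y)"
        using uball_act[OF inv_cl[OF g(1)] yX] by blast
      moreover have "\<phi> (inv g) w = z" using inv1[OF g(1) z] g by simp
      moreover have "uball P d (\<phi> (inv g) y) (s y) \<in> UU" using yS inv_cl[OF g(1)] unfolding UU_def by blast
      ultimately show "z \<in> \<Union>UU" by blast
    qed
  qed
  show "{\<phi> g ` B | g B. g \<in> carrier G \<and> B \<in> UU} = UU"
  proof
    show "{\<phi> g ` B | g B. g \<in> carrier G \<and> B \<in> UU} \<subseteq> UU"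
    proof clarify
      fix g B assume g: "g \<in> carrier G" and B: "B \<in> UU"
      then obtain k y where ky: "k \<in> carrier G" "y \<in> SS" "B = uball P d (\<phi> k y) (s y)" by (auto simp: UU_def)
      have yX: "y \<in> \<Union>P" using SS_props ky by blast
      have "\<phi> g ` B = uball P d (\<phi> g (\<phi> k y)) (s y)" using uball_act[OF g act_X[OF ky(1) yX]] ky by simp
      also have "\<phi> g (\<phi> k y) = \<phi> (g \<otimes> k) y" using comp g ky yX by simp
      finally show "\<phi> g ` B \<in> UU" using m_cl[OF g ky(1)] ky unfolding UU_def by blast
    qed
    show "UU \<subseteq> {\<phi> g ` B | g B. g \<in> carrier G \<and> B \<in> UU}"
    proof
      fix B assume B: "B \<in> UU"
      have "B \<subseteq> \<Union>P" using B unfolding UU_def uball_def by blast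
      hence "\<phi> \<one> ` B = B" using one_act by force
      hence "B = \<phi> \<one> ` B" by simp
      thus "B \<in> {\<phi> g ` B | g B. g \<in> carrier G \<and> B \<in> UU}" using B one_cl by blast
    qed
  qed
  show "\<forall>B\<in>UU. \<forall>g\<in>carrier G. \<phi> g ` B \<inter> B \<noteq> {} \<longrightarrow> \<phi> g ` B = B"
  proof (intro ballI impI)
    fix B g assume B: "B \<in> UU" and g: "g \<in> carrier G" and ne: "\<phi> g ` B \<inter> B \<noteq> {}"
    then obtain k y where ky: "k \<in> carrier G" "y \<in> SS" "B = uball P d (\<phi> k y) (s y)" by (auto simp: UU_def)
    have yX: "y \<in> \<Union>P" using SS_props ky by blast
    let ?a = "\<phi> k y"
    have aX: "?a \<in> \<Union>P" using act_X ky yX by blast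
    have im: "\<phi> g ` B = uball P d (\<phi> g ?a) (s y)" using uball_act[OF g aX] ky by simp
    obtain w where w1: "w \<in> \<phi> g ` B" and w2: "w \<in> B" using ne by blast
    have "w \<in> uball P d (\<phi> g ?a) (s y)" using w1 im by simp
    moreover have "w \<in> uball P d ?a (s y)" using w2 ky(3) by simp
    ultimately have "udist P d (\<phi> g ?a) w < ereal (s y)" "udist P d ?a w < ereal (s y)" unfolding uball_mem by blast+
    hence sp: "same_piece P (\<phi> g ?a) ?a \<and> d (\<phi> g ?a) ?a < s y + s y" by (rule udist_tri)
    have "s y + s y \<le> eps y" unfolding s_def by linarith
    hence "udist P d (\<phi> g ?a) ?a < ereal (eps y)" using sp unfolding udist_def by simp
    moreover have "\<phi> (g \<otimes> k) y = \<phi> g ?a" using comp g ky(1) yX by blast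
    ultimately have "udist P d (\<phi> (g \<otimes> k) y) ?a < ereal (eps y)" by simp
    hence "\<phi> (g \<otimes> k) y = ?a" using sep[OF yX m_cl[OF g ky(1)] ky(1)] by blast
    hence "\<phi> g ?a = ?a" using comp g ky yX by simp
    thus "\<phi> g ` B = B" using im ky by simp
  qed
qed

lemma lfin: "locally_finite_cover P d UU"
  unfolding locally_finite_cover_def
proof (intro ballI)
  fix z assume z: "z \<in> \<Union>P"
  obtain pz where pz: "pz\<in>P" "z\<in>pz" using z by blast
  interpret mz: Metric_space pz d using met pz(1) by blast
  let ?p = "rep z"
  define N where "N = {n::nat. real n < f z + 1}"
  have "n \<le> nat \<lceil>f z\<rceil>" if n: "real n < f z + 1" for n
  proof -
    have "f z \<le> of_int \<lceil>f z\<rceil>" by (rule le_of_int_ceiling)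
    hence "real n < real_of_int (\<lceil>f z\<rceil> + 1)" using n by linarith
    hence "int n < \<lceil>f z\<rceil> + 1" by (metis of_int_less_iff of_int_of_nat_eq)
    thus ?thesis by linarith
  qed
  hence "N \<subseteq> {..nat \<lceil>f z\<rceil>}" unfolding N_def by blast
  hence finN: "finite N" using finite_subset by blast
  define Y where "Y = (\<Union>n\<in>N. Fc ?p n)"
  have finY: "finite Y" unfolding Y_def using finN by (rule finite_UN_I) (use Fc[OF z] in blast)
  have Yp: "y \<in> ?p" if yY0: "y \<in> Y" for y
  proof -
    obtain n where "y \<in> Fc ?p n" using yY0 unfolding Y_def by blast
    hence "y \<in> A ?p n" using Fc[OF z] by blast
    thus ?thesis unfolding A_def by blast
  qed
  define E where "E y = {a. (\<exists>g\<in>carrier G. a = \<phi> g y) \<and> a \<in> pz \<and> d z a < 1}" for y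
  have finE: "finite (E y)" if yY: "y \<in> Y" for y
  proof -
    have yX: "y \<in> \<Union>P" using Yp[OF yY] rep_P[OF z] by blast
    have K: "compactin mz.mtopology (mz.mcball z 1)" using properp[OF pz(1)] .
    have EK: "E y \<subseteq> mz.mcball z 1"
    proof
      fix a assume "a \<in> E y"
      hence "a \<in> pz" "d z a < 1" unfolding E_def by blast+
      thus "a \<in> mz.mcball z 1" using pz(2) by simp
    qed
    have sepE: "\<forall>a\<in>E y. \<forall>b\<in>E y. d a b < eps y \<longrightarrow> a = b"
    proof (intro ballI impI)
      fix a b assume a: "a \<in> E y" and b: "b \<in> E y" and lt: "d a b < eps y"
      obtain g where g: "g\<in>carrier G" "a = \<phi> g y" "a \<in> pz" using a unfolding E_def by blast
      obtain k where k: "k\<in>carrier G" "b = \<phi> k y" "b \<in> pz" using b unfolding E_def by blast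
      have "udist P d (\<phi> g y) (\<phi> k y) < ereal (eps y)"
        using udist_same[OF pz(1) g(3) k(3)] lt g(2) k(2) by simp
      hence "\<phi> g y = \<phi> k y" by (rule sep[OF yX g(1) k(1)])
      thus "a = b" using g(2) k(2) by simp
    qed
    show ?thesis by (rule sep_finite[OF met[OF pz(1)] K EK conjunct1[OF eps[OF yX]] sepE])
  qed
  have sub: "{B\<in>UU. B \<inter> uball P d z (1/2) \<noteq> {}} \<subseteq> (\<lambda>(y,a). uball P d a (s y)) ` (SIGMA y:Y. E y)"
  proof
    fix B assume "B \<in> {B\<in>UU. B \<inter> uball P d z (1/2) \<noteq> {}}"
    hence BU: "B \<in> UU" and Bne: "B \<inter> uball P d z (1/2) \<noteq> {}" by simp_all
    obtain g y where gy: "g\<in>carrier G" "y \<in> SS" "B = uball P d (\<phi> g y) (s y)"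
      using BU unfolding UU_def by blast
    obtain w where wB: "w \<in> B" and wz: "w \<in> uball P d z (1/2)" using Bne by blast
    obtain z' n where z': "z' \<in> \<Union>P" "y \<in> Fc (rep z') n" "y \<in> A (rep z') n" "y \<in> rep z'" "y \<in> \<Union>P"
      using SS_props[OF gy(2)] by blast
    let ?a = "\<phi> g y"
    have aX: "?a \<in> \<Union>P" using act_X[OF gy(1) z'(5)] .
    have "udist P d ?a w < ereal (s y)" using wB gy(3) by (simp add: uball_mem)
    moreover have "udist P d z w < ereal (1/2)" using wz by (simp add: uball_mem)
    ultimately have az: "same_piece P ?a z \<and> d ?a z < s y + 1/2" by (rule udist_tri)
    have "s y \<le> 1/2" unfolding s_def by simp
    hence daz: "d ?a z < 1" using conjunct2[OF az] by linarith
    have "rep y = rep z'" using rep_piece[OF z'(1) z'(4)] .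
    moreover have "rep ?a = rep y" using rep_act[OF gy(1) z'(5)] .
    moreover have "rep ?a = rep z" using rep_same[OF conjunct1[OF az] aX z] .
    ultimately have rz: "rep z' = ?p" by simp
    have "f ?a = f y" using f_act[OF gy(1) z'(5)] .
    moreover have "f ?a \<le> f z + d ?a z" using f_lip[OF conjunct1[OF az] aX z] .
    moreover have "real n \<le> f y" using z'(3) unfolding A_def by blast
    ultimately have "real n < f z + 1" using daz by linarith
    hence nN: "n \<in> N" unfolding N_def by simp
    have "y \<in> Fc ?p n" using z'(2) rz by simp
    hence yY: "y \<in> Y" using nN unfolding Y_def by blast
    have ap: "?a \<in> pz" using sp_in[OF pz(1) pz(2) sp_sym[OF conjunct1[OF az]]] .
    have "d z ?a < 1" using daz mz.commute[of z "?a"] by linarith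
    hence "?a \<in> E y" using gy(1) ap unfolding E_def by blast
    hence "(y, ?a) \<in> (SIGMA y:Y. E y)" by (rule SigmaI[OF yY])
    moreover have "B = (\<lambda>(y,a). uball P d a (s y)) (y, ?a)" using gy(3) by simp
    ultimately show "B \<in> (\<lambda>(y,a). uball P d a (s y)) ` (SIGMA y:Y. E y)" by (rule rev_image_eqI)
  qed
  have "finite (SIGMA y:Y. E y)" using finY finE by (rule finite_SigmaI)
  hence "finite {B\<in>UU. B \<inter> uball P d z (1/2) \<noteq> {}}" using sub finite_subset by blast
  thus "\<exists>r>0. finite {B\<in>UU. B \<inter> uball P d z r \<noteq> {}}" by (intro exI[of _ "1/2"]) simp
qed

end

theorem proposition4p2:
  fixes G :: "('g, 'm) monoid_scheme" and \<phi> :: "'g \<Rightarrow> 'a \<Rightarrow> 'a"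
    and P :: "'a set set" and d :: "'a \<Rightarrow> 'a \<Rightarrow> real"
  assumes "countable_union_proper_CAT0 P d"
    and "isometric_action G \<phi> P d"
    and "discrete_orbits G \<phi> P d"
  shows "\<exists>\<U>. good_cover G \<phi> P d \<U> \<and> locally_finite_cover P d \<U>"
proof -
  interpret PS G \<phi> P d by (rule PS.intro) (rule assms)+
  show ?thesis using good lfin by blast
qed

end
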